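(* Consider the two-user scalar fading multiple access channel and the Stackelberg game described in the context. For every pair $(\mu_1,\mu_2)$ with $0\le\mu_1<\infty$, $0\le\mu_2<\infty$ and every $\epsilon>0$, an $\epsilon$-Stackelberg strategy exists.
   Context: Channel: $y=\sqrt{h_1}x_1+\sqrt{h_2}x_2+z$, noise variance $\sigma^2>0$; the fading $\mathbf h=(h_1,h_2)$ is stationary ergodic with a stationary distribution on $(0,\infty)^2$ having a continuous bounded density $f$; channel state is known everywhere. User $i$ has power budget $\bar P_i>0$ and feasible set $\mathcal F_i$ of measurable $\mathcal P_i\ge0$ with $E[\mathcal P_i(\mathbf h)]\le\bar P_i$. Stackelberg game: the base station (leader) announces a measurable set $D_1\subseteq(0,\infty)^2$; it then decodes user 1 first on $D_1$ and user 2 first on $D_1^c$. The users then play the low-level game with payoffs $\bar R_1(D_1,\mathcal P_1,\mathcal P_2)=\iint\tfrac12\log_2\Big(1+\frac{\mathcal P_1h_1}{\sigma^2+\mathcal P_2h_2I_{\{(h_1,h_2)\in D_1\}}}\Big)f\,dh_1dh_2$, $\bar R_2(D_1,\mathcal P_1,\mathcal P_2)=\iint\tfrac12\log_2\Big(1+\frac{\mathcal P_2h_2}{\sigma^2+\mathcal P_1h_1I_{\{(h_1,h_2)\in D_1^c\}}}\Big)f\,dh_1dh_2$. For each $D_1$ this low-level game has a unique admissible Nash equilibrium $(\mathcal P_{1D_1},\mathcal P_{2D_1})$ (a Nash equilibrium not Pareto-dominated in payoffs by another Nash equilibrium). The base station's payoff is $J(D_1)=\mu_1\bar R_1(D_1,\mathcal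 P_{1D_1},\mathcal P_{2D_1})+\mu_2\bar R_2(D_1,\mathcal P_{1D_1},\mathcal P_{2D_1})$. Let $R^*=\sup_{D_1}J(D_1)$. For $\epsilon>0$, a strategy $D_{1,\epsilon}^*$ is an $\epsilon$-Stackelberg strategy if $J(D_{1,\epsilon}^* )\ge R^*-\epsilon$. *)

theory Defs
  imports "HOL-Analysis.Analysis"
begin

definition fading_space :: "(real \<times> real) set" where
  "fading_space = {0<..} \<times> {0<..}"

definition fading_measure :: "(real \<times> real \<Rightarrow> real) \<Rightarrow> (real \<times> real) measure" where
  "fading_measure f = density lborel (\<lambda>h. ennreal (f h) * indicator fading_space h)"

definition feasible :: "(real \<times> real \<Rightarrow> real) \<Rightarrow> real \<Rightarrow> (real \<times> real \<Rightarrow> real) set" where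
  "feasible f Pbar = {P. P \<in> borel_measurable borel \<and> (\<forall>h. 0 \<le> P h) \<and>
      (\<integral>\<^sup>+ h. ennreal (P h) \<partial>fading_measure f) \<le> ennreal Pbar}"

definition bs_strategies :: "(real \<times> real) set set" where
  "bs_strategies = {D. D \<in> sets borel \<and> D \<subseteq> fading_space}"

definition rate1 :: "(real \<times> real \<Rightarrow> real) \<Rightarrow> real \<Rightarrow> (real \<times> real) set
    \<Rightarrow> (real \<times> real \<Rightarrow> real) \<Rightarrow> (real \<times> real \<Rightarrow> real) \<Rightarrow> ennreal" where
  "rate1 f \<sigma>2 D P1 P2 = (\<integral>\<^sup>+ h. ennreal (1/2 * log 2 (1 + P1 h * fst h /
      (\<sigma>2 + P2 h * snd h * indicator D h))) \<partial>fading_measure f)"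

definition rate2 :: "(real \<times> real \<Rightarrow> real) \<Rightarrow> real \<Rightarrow> (real \<times> real) set
    \<Rightarrow> (real \<times> real \<Rightarrow> real) \<Rightarrow> (real \<times> real \<Rightarrow> real) \<Rightarrow> ennreal" where
  "rate2 f \<sigma>2 D P1 P2 = (\<integral>\<^sup>+ h. ennreal (1/2 * log 2 (1 + P2 h * snd h /
      (\<sigma>2 + P1 h * fst h * indicator (- D) h))) \<partial>fading_measure f)"

definition is_NE :: "(real \<times> real \<Rightarrow> real) \<Rightarrow> real \<Rightarrow> real \<Rightarrow> real \<Rightarrow> (real \<times> real) set
    \<Rightarrow> (real \<times> real \<Rightarrow> real) \<Rightarrow> (real \<times> real \<Rightarrow> real) \<Rightarrow> bool" where
  "is_NE f \<sigma>2 Pbar1 Pbar2 D P1 P2 \<longleftrightarrow>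
     P1 \<in> feasible f Pbar1 \<and> P2 \<in> feasible f Pbar2 \<and>
     (\<forall>Q1 \<in> feasible f Pbar1. rate1 f \<sigma>2 D Q1 P2 \<le> rate1 f \<sigma>2 D P1 P2) \<and>
     (\<forall>Q2 \<in> feasible f Pbar2. rate2 f \<sigma>2 D P1 Q2 \<le> rate2 f \<sigma>2 D P1 P2)"

definition admissible_NE :: "(real \<times> real \<Rightarrow> real) \<Rightarrow> real \<Rightarrow> real \<Rightarrow> real \<Rightarrow> (real \<times> real) set
    \<Rightarrow> (real \<times> real \<Rightarrow> real) \<Rightarrow> (real \<times> real \<Rightarrow> real) \<Rightarrow> bool" where
  "admissible_NE f \<sigma>2 Pbar1 Pbar2 D P1 P2 \<longleftrightarrow>
     is_NE f \<sigma>2 Pbar1 Pbar2 D P1 P2 \<and>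
     \<not> (\<exists>Q1 Q2. is_NE f \<sigma>2 Pbar1 Pbar2 D Q1 Q2 \<and>
          rate1 f \<sigma>2 D P1 P2 \<le> rate1 f \<sigma>2 D Q1 Q2 \<and>
          rate2 f \<sigma>2 D P1 P2 \<le> rate2 f \<sigma>2 D Q1 Q2 \<and>
          (rate1 f \<sigma>2 D P1 P2 < rate1 f \<sigma>2 D Q1 Q2 \<or>
           rate2 f \<sigma>2 D P1 P2 < rate2 f \<sigma>2 D Q1 Q2))"

end

theory Submission
  imports Defs
begin

lemma AE_fs:
  assumes "continuous_on fading_space f"
  shows "AE h in fading_measure f. h \<in> fading_space"
proof -
  have o: "open fading_space" unfolding fading_space_def by (intro open_Times open_greaterThan)
  have m: "(\<lambda>x. indicator fading_space x *\<^sub>R f x) \<in> borel_measurable borel"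
    using o assms by (intro borel_measurable_continuous_on_indicator) auto
  have eq: "(\<lambda>h. ennreal (f h) * indicator fading_space h) = (\<lambda>x. ennreal (indicator fading_space x *\<^sub>R f x))"
    by (auto simp: fun_eq_iff split: split_indicator)
  have m2: "(\<lambda>h. ennreal (f h) * indicator fading_space h) \<in> borel_measurable lborel"
    unfolding eq using m by (simp add: measurable_lborel1)
  show ?thesis unfolding fading_measure_def
    by (subst AE_density[OF m2]) (auto split: split_indicator)
qed

lemma fs_sets: "fading_space \<in> sets borel"
proof -
  have "open fading_space" unfolding fading_space_def by (intro open_Times open_greaterThan)
  then show ?thesis by auto
qed

theorem corollary1:
  fixes f :: "real \<times> real \<Rightarrow> real"
    and \<sigma>2 Pbar1 Pbar2 \<mu>1 \<mu>2 \<epsilon> :: real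
    and eq1 eq2 :: "(real \<times> real) set \<Rightarrow> real \<times> real \<Rightarrow> real"
  assumes f_nonneg: "\<forall>h \<in> fading_space. 0 \<le> f h"
    and f_cont: "continuous_on fading_space f"
    and f_bdd: "bounded (f ` fading_space)"
    and f_prob: "emeasure (fading_measure f) (space (fading_measure f)) = 1"
    and \<sigma>2_pos: "\<sigma>2 > 0"
    and Pbar1_pos: "Pbar1 > 0" and Pbar2_pos: "Pbar2 > 0"
    and unique_admissible_NE: "\<forall>D \<in> bs_strategies.
        admissible_NE f \<sigma>2 Pbar1 Pbar2 D (eq1 D) (eq2 D) \<and>
        (\<forall>Q1 Q2. admissible_NE f \<sigma>2 Pbar1 Pbar2 D Q1 Q2 \<longrightarrow>
           (AE h in fading_measure f. Q1 h = eq1 D h \<and> Q2 h = eq2 D h))"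
    and \<mu>1_nonneg: "0 \<le> \<mu>1" and \<mu>2_nonneg: "0 \<le> \<mu>2"
    and \<epsilon>_pos: "\<epsilon> > 0"
  shows "\<exists>D \<in> bs_strategies.
     ennreal \<mu>1 * rate1 f \<sigma>2 D (eq1 D) (eq2 D) + ennreal \<mu>2 * rate2 f \<sigma>2 D (eq1 D) (eq2 D)
     \<ge> (SUP D' \<in> bs_strategies. ennreal \<mu>1 * rate1 f \<sigma>2 D' (eq1 D') (eq2 D')
                                + ennreal \<mu>2 * rate2 f \<sigma>2 D' (eq1 D') (eq2 D')) - ennreal \<epsilon>"
proof -
  define M where "M = fading_measure f"
  define J where "J D = ennreal \<mu>1 * rate1 f \<sigma>2 D (eq1 D) (eq2 D) + ennreal \<mu>2 * rate2 f \<sigma>2 D (eq1 D) (eq2 D)" for D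
  define S where "S = (SUP D' \<in> bs_strategies. J D')"
  define r1 where "r1 Q = (\<integral>\<^sup>+ h. ennreal (1/2 * log 2 (1 + Q h * fst h / \<sigma>2)) \<partial>M)" for Q :: "real \<times> real \<Rightarrow> real"
  define r2 where "r2 Q = (\<integral>\<^sup>+ h. ennreal (1/2 * log 2 (1 + Q h * snd h / \<sigma>2)) \<partial>M)" for Q :: "real \<times> real \<Rightarrow> real"
  define A1 where "A1 = (SUP Q \<in> feasible f Pbar1. r1 Q)"
  define A2 where "A2 = (SUP Q \<in> feasible f Pbar2. r2 Q)"
  have AE: "AE h in M. h \<in> fading_space" unfolding M_def using AE_fs[OF f_cont] .
  have e_in: "{} \<in> bs_strategies" unfolding bs_strategies_def by auto
  have fs_in: "fading_space \<in> bs_strategies" unfolding bs_strategies_def using fs_sets by auto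
  have NE: "is_NE f \<sigma>2 Pbar1 Pbar2 D (eq1 D) (eq2 D)" if "D \<in> bs_strategies" for D
    using unique_admissible_NE that unfolding admissible_NE_def by blast
  have up1: "rate1 f \<sigma>2 D P1 P2 \<le> r1 P1" if "P1 \<in> feasible f Pbar1" "P2 \<in> feasible f Pbar2" for D P1 P2
    unfolding rate1_def r1_def M_def[symmetric]
  proof (rule nn_integral_mono_AE)
    show "AE h in M. ennreal (1/2 * log 2 (1 + P1 h * fst h / (\<sigma>2 + P2 h * snd h * indicator D h)))
        \<le> ennreal (1/2 * log 2 (1 + P1 h * fst h / \<sigma>2))"
      using AE
    proof eventually_elim
      case (elim h)
      have p1: "0 \<le> P1 h" "0 \<le> P2 h" using that unfolding feasible_def by blast+
      have h: "fst h > 0" "snd h > 0" using elim unfolding fading_space_def by auto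
      have d: "\<sigma>2 \<le> \<sigma>2 + P2 h * snd h * indicator D h"
        using p1 h by (auto split: split_indicator)
      have n: "0 \<le> P1 h * fst h" using p1 h by auto
      have "P1 h * fst h / (\<sigma>2 + P2 h * snd h * indicator D h) \<le> P1 h * fst h / \<sigma>2"
        using d n \<sigma>2_pos by (intro divide_left_mono) auto
      moreover have "0 \<le> P1 h * fst h / (\<sigma>2 + P2 h * snd h * indicator D h)"
        using d n \<sigma>2_pos by auto
      ultimately have "log 2 (1 + P1 h * fst h / (\<sigma>2 + P2 h * snd h * indicator D h)) \<le> log 2 (1 + P1 h * fst h / \<sigma>2)"
        by (subst log_le_cancel_iff) auto
      then show ?case by (intro ennreal_leI) auto
    qed
  qed
  have up2: "rate2 f \<sigma>2 D P1 P2 \<le> r2 P2" if "P1 \<in> feasible f Pbar1" "P2 \<in> feasible f Pbar2" for D P1 P2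
    unfolding rate2_def r2_def M_def[symmetric]
  proof (rule nn_integral_mono_AE)
    show "AE h in M. ennreal (1/2 * log 2 (1 + P2 h * snd h / (\<sigma>2 + P1 h * fst h * indicator (- D) h)))
        \<le> ennreal (1/2 * log 2 (1 + P2 h * snd h / \<sigma>2))"
      using AE
    proof eventually_elim
      case (elim h)
      have p1: "0 \<le> P1 h" "0 \<le> P2 h" using that unfolding feasible_def by blast+
      have h: "fst h > 0" "snd h > 0" using elim unfolding fading_space_def by auto
      have d: "\<sigma>2 \<le> \<sigma>2 + P1 h * fst h * indicator (- D) h"
        using p1 h by (auto split: split_indicator)
      have n: "0 \<le> P2 h * snd h" using p1 h by auto
      have "P2 h * snd h / (\<sigma>2 + P1 h * fst h * indicator (- D) h) \<le> P2 h * snd h / \<sigma>2"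
        using d n \<sigma>2_pos by (intro divide_left_mono) auto
      moreover have "0 \<le> P2 h * snd h / (\<sigma>2 + P1 h * fst h * indicator (- D) h)"
        using d n \<sigma>2_pos by auto
      ultimately have "log 2 (1 + P2 h * snd h / (\<sigma>2 + P1 h * fst h * indicator (- D) h)) \<le> log 2 (1 + P2 h * snd h / \<sigma>2)"
        by (subst log_le_cancel_iff) auto
      then show ?case by (intro ennreal_leI) auto
    qed
  qed
  have Jle: "J D \<le> ennreal \<mu>1 * A1 + ennreal \<mu>2 * A2" if "D \<in> bs_strategies" for D
  proof -
    have f1: "eq1 D \<in> feasible f Pbar1" and f2: "eq2 D \<in> feasible f Pbar2"
      using NE[OF that] unfolding is_NE_def by auto
    have "rate1 f \<sigma>2 D (eq1 D) (eq2 D) \<le> A1"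
      using up1[OF f1 f2] f1 unfolding A1_def by (meson SUP_upper order_trans)
    moreover have "rate2 f \<sigma>2 D (eq1 D) (eq2 D) \<le> A2"
      using up2[OF f1 f2] f2 unfolding A2_def by (meson SUP_upper order_trans)
    ultimately show ?thesis unfolding J_def by (intro add_mono mult_left_mono) auto
  qed
  have J0: "ennreal \<mu>1 * A1 \<le> J {}"
  proof -
    have "r1 Q \<le> rate1 f \<sigma>2 {} (eq1 {}) (eq2 {})" if "Q \<in> feasible f Pbar1" for Q
    proof -
      have "rate1 f \<sigma>2 {} Q (eq2 {}) \<le> rate1 f \<sigma>2 {} (eq1 {}) (eq2 {})"
        using NE[OF e_in] that unfolding is_NE_def by blast
      moreover have "rate1 f \<sigma>2 {} Q (eq2 {}) = r1 Q"
        unfolding rate1_def r1_def M_def by simp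
      ultimately show ?thesis by simp
    qed
    then have "A1 \<le> rate1 f \<sigma>2 {} (eq1 {}) (eq2 {})" unfolding A1_def by (rule SUP_least)
    then show ?thesis unfolding J_def
      by (meson add_increasing2 mult_left_mono order_trans zero_le)
  qed
  have J1: "ennreal \<mu>2 * A2 \<le> J fading_space"
  proof -
    let ?D = fading_space
    have "r2 Q \<le> rate2 f \<sigma>2 ?D (eq1 ?D) (eq2 ?D)" if "Q \<in> feasible f Pbar2" for Q
    proof -
      have "rate2 f \<sigma>2 ?D (eq1 ?D) Q \<le> rate2 f \<sigma>2 ?D (eq1 ?D) (eq2 ?D)"
        using NE[OF fs_in] that unfolding is_NE_def by blast
      moreover have "rate2 f \<sigma>2 ?D (eq1 ?D) Q = r2 Q"
        unfolding rate2_def r2_def M_def[symmetric]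
        by (rule nn_integral_cong_AE) (use AE in \<open>auto simp: indicator_def\<close>)
      ultimately show ?thesis by simp
    qed
    then have "A2 \<le> rate2 f \<sigma>2 ?D (eq1 ?D) (eq2 ?D)" unfolding A2_def by (rule SUP_least)
    then show ?thesis unfolding J_def
      by (meson add_increasing mult_left_mono order_trans zero_le)
  qed
  have "\<exists>D \<in> bs_strategies. S - ennreal \<epsilon> \<le> J D"
  proof (cases "S = top")
    case True
    have "S \<le> ennreal \<mu>1 * A1 + ennreal \<mu>2 * A2" unfolding S_def using Jle by (rule SUP_least)
    with True have "ennreal \<mu>1 * A1 = top \<or> ennreal \<mu>2 * A2 = top" by (auto simp: top_unique)
    then show ?thesis
    proof
      assume "ennreal \<mu>1 * A1 = top"
      then have "J {} = top" using J0 by (simp add: top_unique)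
      then show ?thesis using e_in by (metis top_greatest)
    next
      assume "ennreal \<mu>2 * A2 = top"
      then have "J fading_space = top" using J1 by (simp add: top_unique)
      then show ?thesis using fs_in by (metis top_greatest)
    qed
  next
    case False
    show ?thesis
    proof (cases "S = 0")
      case True
      then show ?thesis using e_in by (metis diff_le_self_ennreal le_zero_eq zero_le)
    next
      case False2: False
      have "S - ennreal \<epsilon> < S"
        using False False2 \<epsilon>_pos by (intro ennreal_between) (auto simp: less_top[symmetric] zero_less_iff_neq_zero)
      then obtain D where "D \<in> bs_strategies" "S - ennreal \<epsilon> < J D"
        unfolding S_def by (auto simp: less_SUP_iff)
      then show ?thesis by (auto intro: less_imp_le)
    qed
  qed
  then show ?thesis unfolding S_def J_def by simp
qed

end
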